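(* The large deviation functions of the tracer position have the following asymptotics as $|\xi|\to\infty$: $$\phi_a(\xi)\simeq\rho|\xi|,\qquad \phi_q(\xi)\simeq\frac{\rho}{3\sigma^2}|\xi|^3 .$$ Here $\simeq$ means the ratio tends to $1$.
   Context: System: Brownian point particles on $\mathbb{R}$ with hard-core repulsion. Free single-particle propagator: $g(z,t\mid y,0)=(\pi\sigma^2 t)^{-1/2}\exp[-(z-y)^2/(\sigma^2 t)]$. The tracer starts at the origin. The other particles' initial positions form a Poisson point process of intensity $\rho>0$. $\phi_a$ is the annealed large deviation function of the tracer position: $$\phi_a(\xi)=\frac{\rho\sigma}{2}\big[\sqrt{h(\xi/\sigma)}-\sqrt{h(-\xi/\sigma)}\big]^2,\qquad h(\xi)=\int_\xi^\infty\operatorname{erfc}(\eta)\,d\eta .$$ $\phi_q$ is the quenched large deviation function, given parametrically by $$\phi_q(\xi)=\rho B\xi-\rho\sigma I(B),\qquad \xi=\sigma I'(B),$$ $$I(B)=\int_0^\infty\ln[1+\sinh^2(B/2)\operatorname{erfc}(\eta)\operatorname{erfc}(-\eta)]\,d\eta,$$ and extended to negative $\xi$ by $\phi_q(-\xi)=\phi_q(\xi)$. $\operatorname{erfc}(x)=\frac{2}{\sqrt\pi}\int_x^\infty e^{-u^2}du$. *)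

theory Defs
  imports "HOL-Analysis.Analysis"
begin

definition erfc :: "real \<Rightarrow> real" where
  "erfc x = 2 / sqrt pi * integral {x..} (\<lambda>u. exp (- (u^2)))"

definition hfun :: "real \<Rightarrow> real" where
  "hfun \<xi> = integral {\<xi>..} erfc"

definition phi_a :: "real \<Rightarrow> real \<Rightarrow> real \<Rightarrow> real" where
  "phi_a \<rho> \<sigma> \<xi> = \<rho> * \<sigma> / 2 * (sqrt (hfun (\<xi> / \<sigma>)) - sqrt (hfun (- \<xi> / \<sigma>)))^2"

definition Ifun :: "real \<Rightarrow> real" where
  "Ifun B = integral {0..} (\<lambda>\<eta>. ln (1 + (sinh (B / 2))^2 * erfc \<eta> * erfc (- \<eta>)))"

definition phi_q :: "real \<Rightarrow> real \<Rightarrow> real \<Rightarrow> real" where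
  "phi_q \<rho> \<sigma> \<xi> =
     (let B = (THE B. B \<ge> 0 \<and> \<sigma> * deriv Ifun B = \<bar>\<xi>\<bar>)
      in \<rho> * B * \<bar>\<xi>\<bar> - \<rho> * \<sigma> * Ifun B)"

end

theory Submission
  imports Defs "HOL-Probability.Probability" "HOL-Real_Asymp.Real_Asymp"
begin


lemma gauss_half: "((\<lambda>u::real. exp (- (u^2))) has_integral (sqrt pi / 2)) {0..}"
proof -
  have b: "has_bochner_integral lborel (\<lambda>x. indicator {0..} x *\<^sub>R exp (- x\<^sup>2)) (sqrt pi / 2)"
    by (rule gaussian_moment_0)
  then have i: "integrable lborel (\<lambda>x::real. indicator {0..} x *\<^sub>R exp (- x\<^sup>2))"
    and e: "integral\<^sup>L lborel (\<lambda>x::real. indicator {0..} x *\<^sub>R exp (- x\<^sup>2)) = sqrt pi / 2"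
    by (auto simp: has_bochner_integral_iff)
  have "((\<lambda>x::real. indicator {0..} x *\<^sub>R exp (- x\<^sup>2)) has_integral (sqrt pi / 2)) UNIV"
    using has_integral_integral_lborel[OF i] unfolding e .
  moreover have "(\<lambda>x::real. indicator {0..} x *\<^sub>R exp (- x\<^sup>2)) = (\<lambda>x. if x \<in> {0..} then exp (- x\<^sup>2) else 0)"
    by (auto simp: indicator_def)
  ultimately show ?thesis
    by (simp only: has_integral_restrict_UNIV)
qed

lemma dom_int:
  fixes h k :: "real \<Rightarrow> real"
  assumes S: "closed S" and "continuous_on S h" "k integrable_on S" "\<And>x. x\<in>S \<Longrightarrow> \<bar>h x\<bar> \<le> k x"
  shows "h integrable_on S"
proof -
  have Sl: "S \<in> sets lebesgue" using S by (simp add: borel_closed sets_completionI_sets)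
  have "h absolutely_integrable_on S"
    by (rule measurable_bounded_by_integrable_imp_absolutely_integrable[OF
         continuous_imp_measurable_on_sets_lebesgue[OF assms(2) Sl] Sl assms(3)]) (use assms(4) in auto)
  then show ?thesis using absolutely_integrable_on_def by blast
qed

lemma g_le_exp: "exp (- ((u::real)^2)) \<le> exp (1/4) * exp (- u)"
proof -
  have "0 \<le> (u - 1/2)^2" by simp
  then have "- (u^2) \<le> 1/4 + - u" by (simp add: power2_eq_square algebra_simps)
  then show ?thesis by (simp flip: exp_add)
qed

lemma exp_int: "(\<lambda>x::real. C * exp (- x)) integrable_on {a..}"
proof -
  have "(\<lambda>x::real. exp (- 1 * x)) integrable_on {a..}" by (rule integrable_on_exp_minus_to_infinity) simp
  then have "(\<lambda>x::real. C * exp (- 1 * x)) integrable_on {a..}" by (rule integrable_on_mult_right)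
  then show ?thesis by simp
qed

lemma g_int: "(\<lambda>u::real. exp (- (u^2))) integrable_on {a..}"
  apply (rule dom_int[where k="\<lambda>x. exp (1/4) * exp (- x)"])
  apply simp
  apply (intro continuous_intros)
  apply (rule exp_int)
  using g_le_exp by simp

lemma split_Ici:
  fixes f :: "real \<Rightarrow> real"
  assumes "a \<le> x" "f integrable_on {a..x}" "f integrable_on {x..}"
  shows "integral {a..} f = integral {a..x} f + integral {x..} f"
proof -
  have e: "{a..} = {a..x} \<union> {x..}" using assms(1) by auto
  have n: "negligible ({a..x} \<inter> {x..})"
  proof -
    have "{a..x} \<inter> {x..} = {x}" using assms(1) by auto
    then show ?thesis by simp
  qed
  show ?thesis unfolding e using assms n by (simp add: integral_Un)
qed

lemma g_cont: "continuous_on S (\<lambda>u::real. exp (- (u^2)))"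
  by (intro continuous_intros)

lemma erfc_alt:
  assumes "a \<le> x"
  shows "erfc x = 2 / sqrt pi * (integral {a..} (\<lambda>u. exp (- (u^2))) - integral {a..x} (\<lambda>u. exp (- (u^2))))"
proof -
  have "integral {a..} (\<lambda>u. exp (- (u^2))) = integral {a..x} (\<lambda>u. exp (- (u^2))) + integral {x..} (\<lambda>u. exp (- (u^2)))"
    by (rule split_Ici[OF assms integrable_continuous_interval[OF g_cont] g_int])
  then show ?thesis by (simp add: erfc_def)
qed

lemma erfc_deriv: "(erfc has_real_derivative (- (2 / sqrt pi) * exp (- (x^2)))) (at x)"
proof -
  define a where "a = x - 1"
  define b where "b = x + 1"
  let ?g = "\<lambda>u::real. exp (- (u^2))"
  define F where "F y = 2 / sqrt pi * (integral {a..} ?g - integral {a..y} ?g)" for y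
  have "((\<lambda>y. integral {a..y} ?g) has_real_derivative ?g x) (at x within {a..b})"
    by (rule integral_has_real_derivative[OF g_cont]) (auto simp: a_def b_def)
  moreover have "at x within {a..b} = at x"
    by (rule at_within_interior) (auto simp: a_def b_def)
  ultimately have d: "((\<lambda>y. integral {a..y} ?g) has_real_derivative ?g x) (at x)" by simp
  have "(F has_real_derivative (- (2 / sqrt pi) * exp (- (x^2)))) (at x)"
    unfolding F_def by (rule derivative_eq_intros d refl | simp)+
  then show ?thesis
  proof (rule has_field_derivative_transform_within[where d=1])
    fix y assume "y \<in> UNIV" "dist y x < 1"
    then have "a \<le> y" by (auto simp: a_def dist_real_def)
    then show "F y = erfc y" unfolding F_def by (simp add: erfc_alt)
  qed auto
qed

lemma erfc_cont: "continuous_on S erfc"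
  using erfc_deriv by (meson DERIV_isCont continuous_at_imp_continuous_on)

lemma erfc_0: "erfc 0 = 1"
  using gauss_half by (simp add: erfc_def integral_unique)

lemma erfc_sym: "erfc (- x) = 2 - erfc x"
proof -
  define H where "H y = erfc (- y) + erfc y" for y
  have "(H has_real_derivative 0) (at y)" for y
  proof -
    have d1: "((\<lambda>z. erfc (- z)) has_real_derivative (- (2 / sqrt pi) * exp (- ((-y)^2))) * (-1)) (at y)"
      by (rule DERIV_chain2[OF erfc_deriv]) (rule derivative_eq_intros refl | simp)+
    have "(H has_real_derivative (- (2 / sqrt pi) * exp (- ((-y)^2))) * (-1) + (- (2 / sqrt pi) * exp (- (y^2)))) (at y)"
      unfolding H_def by (rule DERIV_add[OF d1 erfc_deriv])
    then show ?thesis by simp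
  qed
  then have "H x = H 0" by (metis DERIV_isconst_all)
  then show ?thesis by (simp add: H_def erfc_0)
qed

lemma erfc_nonneg: "erfc x \<ge> 0"
  unfolding erfc_def by (intro mult_nonneg_nonneg integral_nonneg g_int) auto

lemma erfc_le2: "erfc x \<le> 2"
  using erfc_nonneg[of "-x"] erfc_sym[of x] by simp

lemma erfc_le1: assumes "x \<ge> 0" shows "erfc x \<le> 1"
proof -
  have "integral {x..} (\<lambda>u::real. exp (- (u^2))) \<le> integral {0..} (\<lambda>u::real. exp (- (u^2)))"
    by (rule integral_subset_le) (use assms in \<open>auto intro: g_int\<close>)
  then have "erfc x \<le> erfc 0" unfolding erfc_def by (intro mult_left_mono) auto
  then show ?thesis by (simp add: erfc_0)
qed

lemma sqrt_pi_ge1: "sqrt pi \<ge> 1" using pi_ge_two by simp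
lemma sqrt_pi_le2: "sqrt pi \<le> 2"
proof -
  have "pi \<le> 4" using pi_less_4 by simp
  then have "sqrt pi \<le> sqrt 4" by (rule real_sqrt_le_mono)
  then show ?thesis by simp
qed

lemma erfc_upper:
  assumes "u \<ge> 0"
  shows "erfc u \<le> 2 * exp (1/4) * exp (- (u^2))"
proof -
  let ?g = "\<lambda>t::real. exp (- (t^2))"
  define C where "C = exp (1/4) * exp (- (u^2)) * exp u"
  have hi: "((\<lambda>t. C * exp (- 1 * t)) has_integral (C * (exp (- 1 * u) / 1))) {u..}"
    by (intro has_integral_mult_right has_integral_exp_minus_to_infinity) simp
  have le: "?g t \<le> C * exp (- 1 * t)" if "t \<in> {u..}" for t
  proof -
    have "0 \<le> (t - u - 1/2)^2" by simp
    moreover have "u * (t - u) \<ge> 0" using that assms by simp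
    ultimately have "- (t^2) \<le> 1/4 + - (u^2) + u + - 1 * t"
      by (simp add: power2_eq_square algebra_simps)
    then have "exp (- (t^2)) \<le> exp (1/4 + - (u^2) + u + - 1 * t)" by simp
    also have "exp (1/4 + - (u^2) + u + - 1 * t) = C * exp (- 1 * t)"
      unfolding C_def by (simp only: exp_add)
    finally show ?thesis .
  qed
  have "integral {u..} ?g \<le> integral {u..} (\<lambda>t. C * exp (- 1 * t))"
    by (rule integral_le[OF g_int]) (use hi le in auto)
  also have "\<dots> = C * exp (- u)" using integral_unique[OF hi] by simp
  also have "\<dots> = exp (1/4) * exp (- (u^2))" by (simp add: C_def flip: exp_add)
  finally have i: "integral {u..} ?g \<le> exp (1/4) * exp (- (u^2))" .
  have "erfc u \<le> 2 / sqrt pi * (exp (1/4) * exp (- (u^2)))"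
    unfolding erfc_def by (rule mult_left_mono[OF i]) simp
  also have "\<dots> \<le> 2 * (exp (1/4) * exp (- (u^2)))"
    using sqrt_pi_ge1 by (intro mult_right_mono) (auto simp: field_simps)
  finally show ?thesis by simp
qed

lemma erfc_lower:
  assumes "u \<ge> 0"
  shows "erfc u \<ge> exp (- ((u + 1)^2))"
proof -
  let ?g = "\<lambda>t::real. exp (- (t^2))"
  have "integral {u..u+1} (\<lambda>t. exp (- ((u + 1)^2))) \<le> integral {u..u+1} ?g"
  proof (rule integral_le)
    show "(\<lambda>t. exp (- ((u + 1)^2))) integrable_on {u..u+1}"
      by (rule integrable_continuous_interval) (rule continuous_on_const)
    show "?g integrable_on {u..u+1}" by (rule integrable_continuous_interval[OF g_cont])
    fix t assume "t \<in> {u..u+1}"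
    then have "t^2 \<le> (u+1)^2" using assms by (intro power_mono) auto
    then show "exp (- ((u + 1)^2)) \<le> ?g t" by simp
  qed
  also have "\<dots> \<le> integral {u..} ?g"
    by (rule integral_subset_le) (auto intro: g_int integrable_continuous_interval[OF g_cont])
  finally have i: "exp (- ((u + 1)^2)) \<le> integral {u..} ?g" by simp
  have "exp (- ((u + 1)^2)) \<le> 2 / sqrt pi * exp (- ((u + 1)^2))"
    using sqrt_pi_le2 by (simp add: field_simps)
  also have "\<dots> \<le> erfc u" unfolding erfc_def by (rule mult_left_mono[OF i]) simp
  finally show ?thesis .
qed



lemma erfc_has_deriv_P:
  "((\<lambda>y. y * erfc y - exp (- (y^2)) / sqrt pi) has_real_derivative erfc x) (at x)"
proof -
  define c where "c = 1 / sqrt pi"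
  have ed: "(erfc has_real_derivative (- (2 * c) * exp (- (y^2)))) (at y)" for y
    using erfc_deriv[of y] by (simp add: c_def)
  have "((\<lambda>y. y * erfc y - c * exp (- (y^2))) has_real_derivative
     (1 * erfc x + x * (- (2 * c) * exp (- (x^2))) - c * (exp (- (x^2)) * (- (2 * x))))) (at x)"
    by (rule derivative_eq_intros ed refl | simp)+
  moreover have "1 * erfc x + x * (- (2 * c) * exp (- (x^2))) - c * (exp (- (x^2)) * (- (2 * x))) = erfc x"
    by (simp add: algebra_simps)
  moreover have "(\<lambda>y. y * erfc y - c * exp (- (y^2))) = (\<lambda>y. y * erfc y - exp (- (y^2)) / sqrt pi)"
    by (simp add: c_def)
  ultimately show ?thesis by simp
qed

lemma x_erfc_lim: "((\<lambda>y. y * erfc y) \<longlongrightarrow> 0) at_top"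
proof (rule tendsto_sandwich[where f="\<lambda>y. 0" and h="\<lambda>y. y * (2 * exp (1/4) * exp (- (y^2)))"])
  show "\<forall>\<^sub>F y in at_top. 0 \<le> y * erfc y"
    using eventually_ge_at_top[of 0] by eventually_elim (simp add: erfc_nonneg)
  show "\<forall>\<^sub>F y in at_top. y * erfc y \<le> y * (2 * exp (1/4) * exp (- (y^2)))"
    using eventually_ge_at_top[of 0] by eventually_elim (simp add: erfc_upper mult_left_mono)
  show "((\<lambda>y. 0::real) \<longlongrightarrow> 0) at_top" by simp
  show "((\<lambda>y::real. y * (2 * exp (1/4) * exp (- (y^2)))) \<longlongrightarrow> 0) at_top" by real_asymp
qed

lemma erfc_has_int: "(erfc has_integral (exp (- (x^2)) / sqrt pi - x * erfc x)) {x..}"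
proof -
  define P where "P y = y * erfc y - exp (- (y^2)) / sqrt pi" for y
  have ev: "\<forall>\<^sub>F y in at_top. integral {x..y} erfc = P y - P x"
    using eventually_ge_at_top[of x]
  proof eventually_elim
    case (elim y)
    have "(erfc has_integral (P y - P x)) {x..y}"
      unfolding P_def
      by (rule fundamental_theorem_of_calculus[OF elim])
         (auto intro!: has_field_derivative_at_within erfc_has_deriv_P simp: has_real_derivative_iff_has_vector_derivative[symmetric])
    then show ?case by (simp add: integral_unique)
  qed
  have "((\<lambda>y. P y - P x) \<longlongrightarrow> (0 - 0) - P x) at_top"
    unfolding P_def
    by (intro tendsto_intros x_erfc_lim) real_asymp
  then have "((\<lambda>y. integral {x..y} erfc) \<longlongrightarrow> - P x) at_top"
    using ev by (simp add: tendsto_cong)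
  then have "(erfc has_integral - P x) {x..}"
    by (intro has_integral_to_inf integrable_continuous_interval erfc_cont erfc_nonneg)
  then show ?thesis by (simp add: P_def)
qed

lemma hfun_closed: "hfun x = exp (- (x^2)) / sqrt pi - x * erfc x"
  unfolding hfun_def using erfc_has_int by (rule integral_unique)

lemma hfun_nonneg: "hfun x \<ge> 0"
  unfolding hfun_def using erfc_has_int[of x] erfc_nonneg
  by (intro integral_nonneg) (auto simp: has_integral_integrable)

lemma hfun_neg: "hfun (- x) = 2 * x + hfun x"
  by (simp add: hfun_closed erfc_sym algebra_simps)

lemma hfun_lim: "(hfun \<longlongrightarrow> 0) at_top"
proof -
  have "((\<lambda>x. exp (- (x^2)) / sqrt pi - x * erfc x) \<longlongrightarrow> 0 - 0) at_top"
    by (intro tendsto_intros x_erfc_lim) real_asymp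
  then show ?thesis by (simp add: hfun_closed[abs_def])
qed

lemma ratio_a:
  assumes "\<rho> > 0" "\<sigma> > 0" "\<xi> \<noteq> 0"
  shows "phi_a \<rho> \<sigma> \<xi> / (\<rho> * \<bar>\<xi>\<bar>) =
    (sqrt (1 + hfun (\<bar>\<xi>\<bar>/\<sigma>) / (2 * (\<bar>\<xi>\<bar>/\<sigma>))) - sqrt (hfun (\<bar>\<xi>\<bar>/\<sigma>) / (2 * (\<bar>\<xi>\<bar>/\<sigma>))))^2"
proof -
  define x where "x = \<bar>\<xi>\<bar>/\<sigma>"
  define h where "h = hfun x"
  have x0: "x > 0" using assms by (simp add: x_def)
  have h0: "h \<ge> 0" by (simp add: h_def hfun_nonneg)
  have key: "phi_a \<rho> \<sigma> \<xi> = \<rho> * \<sigma> / 2 * (sqrt (2*x+h) - sqrt h)^2"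
  proof (cases "\<xi> > 0")
    case True
    then have "\<xi> / \<sigma> = x" "- \<xi> / \<sigma> = - x" by (auto simp: x_def)
    then show ?thesis unfolding phi_a_def h_def by (simp add: hfun_neg power2_commute)
  next
    case False
    then have e1: "\<xi> / \<sigma> = - x" and e2: "- \<xi> / \<sigma> = x" using assms by (auto simp: x_def)
    have "hfun (\<xi> / \<sigma>) = 2*x+h" unfolding e1 h_def by (rule hfun_neg)
    moreover have "hfun (- \<xi> / \<sigma>) = h" unfolding e2 h_def ..
    ultimately show ?thesis unfolding phi_a_def by simp
  qed
  have xi: "\<bar>\<xi>\<bar> = \<sigma> * x" using assms by (simp add: x_def)
  have "phi_a \<rho> \<sigma> \<xi> / (\<rho> * \<bar>\<xi>\<bar>) = (sqrt (2*x+h) - sqrt h)^2 / (2 * x)"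
    unfolding key xi using assms x0 by (simp add: field_simps)
  also have "\<dots> = (sqrt (1 + h / (2*x)) - sqrt (h / (2*x)))^2"
  proof -
    have s2: "sqrt (2*x) > 0" using x0 by simp
    have "1 + h / (2*x) = (2*x+h) / (2*x)" using x0 by (simp add: field_simps)
    then have "sqrt (1 + h / (2*x)) - sqrt (h / (2*x)) = (sqrt (2*x+h) - sqrt h) / sqrt (2*x)"
      by (simp add: real_sqrt_divide diff_divide_distrib)
    then have "(sqrt (1 + h / (2*x)) - sqrt (h / (2*x)))^2 = (sqrt (2*x+h) - sqrt h)^2 / (sqrt (2*x))^2"
      by (simp add: power_divide)
    also have "(sqrt (2*x))^2 = 2*x" using x0 by simp
    finally show ?thesis by simp
  qed
  finally show ?thesis by (simp add: x_def h_def)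
qed

lemma abs_div_at_top:
  assumes "\<sigma> > (0::real)"
  shows "filterlim (\<lambda>\<xi>::real. \<bar>\<xi>\<bar> / \<sigma>) at_top at_infinity"
proof -
  have n: "filterlim (\<lambda>\<xi>::real. norm \<xi>) at_top at_infinity"
    by (rule filterlim_at_infinity_imp_norm_at_top[OF filterlim_ident])
  have "filterlim (\<lambda>\<xi>::real. (1/\<sigma>) * norm \<xi>) at_top at_infinity"
    by (rule filterlim_tendsto_pos_mult_at_top[OF tendsto_const _ n]) (use assms in simp)
  then show ?thesis by (simp add: field_simps)
qed

lemma part_a:
  assumes "\<rho> > 0" "\<sigma> > 0"
  shows "((\<lambda>\<xi>. phi_a \<rho> \<sigma> \<xi> / (\<rho> * \<bar>\<xi>\<bar>)) \<longlongrightarrow> 1) at_infinity"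
proof -
  define R where "R x = (sqrt (1 + hfun x / (2 * x)) - sqrt (hfun x / (2 * x)))^2" for x
  have "((\<lambda>x. hfun x / (2 * x)) \<longlongrightarrow> 0 * 0) at_top"
  proof -
    have "((\<lambda>x. hfun x * (1 / (2 * x))) \<longlongrightarrow> 0 * 0) at_top"
      by (intro tendsto_mult hfun_lim) real_asymp
    then show ?thesis by simp
  qed
  then have "(R \<longlongrightarrow> (sqrt (1 + 0 * 0) - sqrt (0 * 0))^2) at_top"
    unfolding R_def by (intro tendsto_intros)
  then have R1: "(R \<longlongrightarrow> 1) at_top" by simp
  have "((\<lambda>\<xi>. R (\<bar>\<xi>\<bar> / \<sigma>)) \<longlongrightarrow> 1) at_infinity"
    by (rule filterlim_compose[OF R1 abs_div_at_top[OF assms(2)]])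
  moreover have ev: "\<forall>\<^sub>F \<xi> in at_infinity. R (\<bar>\<xi>\<bar> / \<sigma>) = phi_a \<rho> \<sigma> \<xi> / (\<rho> * \<bar>\<xi>\<bar>)"
  proof -
    have "\<forall>\<^sub>F \<xi> in at_infinity. (\<xi>::real) \<noteq> 0"
      unfolding eventually_at_infinity by (rule exI[of _ 1]) auto
    then show ?thesis by eventually_elim (simp add: R_def ratio_a assms)
  qed
  ultimately show ?thesis using tendsto_cong[OF ev] by simp
qed



definition Lc :: "real \<Rightarrow> real \<Rightarrow> real" where
  "Lc c B = ln (1 + (sinh (B/2))^2 * c)"
definition Fc :: "real \<Rightarrow> real \<Rightarrow> real" where
  "Fc c B = c * sinh (B/2) * cosh (B/2) / (1 + c * (sinh (B/2))^2)"
definition Fdc :: "real \<Rightarrow> real \<Rightarrow> real" where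
  "Fdc c B = c * (((cosh (B/2))^2 + (sinh (B/2))^2) * (1 + c * (sinh (B/2))^2) - 2 * c * (sinh (B/2))^2 * (cosh (B/2))^2)
      / (2 * (1 + c * (sinh (B/2))^2)^2)"

lemma L_deriv: assumes "c \<ge> 0" shows "(Lc c has_real_derivative Fc c B) (at B)"
proof -
  have p: "1 + (sinh (B/2))^2 * c > 0" "1 + c * (sinh (B/2))^2 > 0" using assms by (simp_all add: add_pos_nonneg)
  show ?thesis
    unfolding Lc_def Fc_def
    using p by (auto intro!: derivative_eq_intros simp: field_simps power2_eq_square)
qed

lemma F_deriv: assumes "c \<ge> 0" shows "(Fc c has_real_derivative Fdc c B) (at B)"
proof -
  have p: "1 + (sinh (B/2))^2 * c > 0" "1 + c * (sinh (B/2))^2 > 0" using assms by (simp_all add: add_pos_nonneg)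
  show ?thesis
    unfolding Fdc_def Fc_def
    using p by (auto intro!: derivative_eq_intros simp: field_simps power2_eq_square)
qed

lemma ksq: "(cosh (x::real))^2 = (sinh x)^2 + 1" by (rule cosh_square_eq)

lemma cosh_le_exp: "cosh (x::real) \<le> exp \<bar>x\<bar>"
proof -
  have "cosh x = (exp x + exp (- x)) / 2" by (simp add: cosh_def)
  also have "\<dots> \<le> (exp \<bar>x\<bar> + exp \<bar>x\<bar>) / 2" by (intro divide_right_mono add_mono) auto
  finally show ?thesis by simp
qed

lemma sinh_abs_le_exp: "\<bar>sinh (x::real)\<bar> \<le> exp \<bar>x\<bar>"
proof -
  have "\<bar>sinh x\<bar> \<le> cosh x" using sinh_le_cosh_real[of x] sinh_le_cosh_real[of "-x"] by (simp add: abs_le_iff)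
  then show ?thesis using cosh_le_exp[of x] by simp
qed

lemma exp_half_sq: "(exp (\<bar>B\<bar>/2))^2 = exp \<bar>B::real\<bar>"
  by (simp add: power2_eq_square flip: exp_add)

lemma s2_le: "(sinh (B/2))^2 \<le> exp \<bar>B::real\<bar>"
proof -
  have "\<bar>sinh (B/2)\<bar>^2 \<le> (exp (\<bar>B\<bar>/2))^2"
    using sinh_abs_le_exp[of "B/2"] by (intro power_mono) auto
  then show ?thesis by (simp add: exp_half_sq)
qed

lemma k2_le: "(cosh (B/2))^2 \<le> exp \<bar>B::real\<bar>"
proof -
  have "(cosh (B/2))^2 \<le> (exp (\<bar>B\<bar>/2))^2"
    using cosh_le_exp[of "B/2"] by (intro power_mono) auto
  then show ?thesis by (simp add: exp_half_sq)
qed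

lemma sk_le: "\<bar>sinh (B/2) * cosh (B/2)\<bar> \<le> exp \<bar>B::real\<bar>"
proof -
  have "\<bar>sinh (B/2) * cosh (B/2)\<bar> \<le> exp (\<bar>B\<bar>/2) * exp (\<bar>B\<bar>/2)"
    unfolding abs_mult using sinh_abs_le_exp[of "B/2"] cosh_le_exp[of "B/2"]
    by (intro mult_mono) auto
  then show ?thesis by (simp flip: exp_add)
qed

lemma F_abs: assumes "0 \<le> c" shows "\<bar>Fc c B\<bar> \<le> c * exp \<bar>B\<bar>"
proof -
  define s where "s = sinh (B/2)"
  define k where "k = cosh (B/2)"
  have d: "1 + c * s^2 \<ge> 1" using assms by simp
  then have d': "1 + c * s^2 > 0" by simp
  have "\<bar>Fc c B\<bar> = c * \<bar>s * k\<bar> / (1 + c * s^2)"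
    unfolding Fc_def s_def[symmetric] k_def[symmetric] using assms d' by (simp add: abs_mult)
  also have "\<dots> \<le> c * \<bar>s * k\<bar> / 1" using d d' assms by (intro divide_left_mono) auto
  also have "\<dots> = c * \<bar>s * k\<bar>" by simp
  also have "\<dots> \<le> c * exp \<bar>B\<bar>" using sk_le[of B] assms unfolding s_def k_def by (intro mult_left_mono) auto
  finally show ?thesis .
qed

lemma F_nonneg: assumes "0 \<le> c" "0 \<le> B" shows "Fc c B \<ge> 0"
  unfolding Fc_def using assms by (intro divide_nonneg_pos mult_nonneg_nonneg) (auto intro: add_pos_nonneg)

lemma F_le1: assumes "0 \<le> c" "c \<le> 1" shows "Fc c B \<le> 1"
proof -
  define s where "s = sinh (B/2)"
  define k where "k = cosh (B/2)"
  have kk: "k^2 = s^2 + 1" unfolding s_def k_def by (rule ksq)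
  have d: "1 + c * s^2 > 0" using assms by (simp add: add_pos_nonneg)
  have "2 * (s * k) \<le> s^2 + k^2" using sum_squares_ge_zero[of "s - k" 0] by (simp add: power2_eq_square algebra_simps)
  then have "c * (2 * (s * k)) \<le> c * (s^2 + k^2)" using assms by (intro mult_left_mono) auto
  then have "c * s * k \<le> 1 + c * s^2" using kk assms by (simp add: algebra_simps)
  then show ?thesis unfolding Fc_def s_def[symmetric] k_def[symmetric] using d by simp
qed

lemma L_bounds: assumes "0 \<le> c" shows "0 \<le> Lc c B" "Lc c B \<le> c * exp \<bar>B\<bar>"
proof -
  have x: "0 \<le> (sinh (B/2))^2 * c" using assms by simp
  show "0 \<le> Lc c B" unfolding Lc_def using x by simp
  have "Lc c B \<le> (sinh (B/2))^2 * c" unfolding Lc_def by (rule ln_add_one_self_le_self[OF x])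
  also have "\<dots> \<le> exp \<bar>B\<bar> * c" using s2_le[of B] assms by (intro mult_right_mono) auto
  finally show "Lc c B \<le> c * exp \<bar>B\<bar>" by (simp add: mult.commute)
qed

lemma Fd_alt: "Fdc c B = c * ((cosh (B/2))^2 + (sinh (B/2))^2 - c * (sinh (B/2))^2) / (2 * (1 + c * (sinh (B/2))^2)^2)"
proof -
  have "(cosh (B/2))^2 = (sinh (B/2))^2 + 1" by (rule ksq)
  then show ?thesis unfolding Fdc_def by (simp add: algebra_simps power2_eq_square)
qed

lemma Fd_bounds: assumes "0 \<le> c" "c \<le> 1"
  shows "0 \<le> Fdc c B" "Fdc c B \<le> c * exp \<bar>B\<bar>" "c / (2 * exp (2 * \<bar>B\<bar>)) \<le> Fdc c B"
proof -
  define s where "s = sinh (B/2)"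
  define k where "k = cosh (B/2)"
  have kk: "k^2 = s^2 + 1" unfolding s_def k_def by (rule ksq)
  have d1: "1 + c * s^2 \<ge> 1" using assms by simp
  have cs0: "c * s^2 \<ge> 0" using assms by simp
  have F: "Fdc c B = c * (k^2 + s^2 - c * s^2) / (2 * (1 + c * s^2)^2)"
    unfolding Fd_alt s_def k_def ..
  have n0: "k^2 + s^2 - c * s^2 \<ge> k^2"
    using assms mult_right_mono[of c 1 "s^2"] by simp
  have k1: "k^2 \<ge> 1" using kk by simp
  have dsq: "(1 + c * s^2)^2 \<ge> 1" using d1 by (simp add: one_le_power)
  have num: "0 \<le> c * (k^2 + s^2 - c * s^2)" using n0 k1 assms by simp
  have den: "0 < 2 * (1 + c * s^2)^2" using d1 by simp
  show "0 \<le> Fdc c B" unfolding F using num den by simp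
  have "Fdc c B \<le> c * (k^2 + s^2 - c * s^2) / 2"
  proof -
    have "c * (k^2 + s^2 - c * s^2) / (2 * (1 + c * s^2)^2) \<le> c * (k^2 + s^2 - c * s^2) / (2 * 1)"
      using num dsq by (intro divide_left_mono) auto
    then show ?thesis unfolding F by simp
  qed
  also have "\<dots> \<le> c * (exp \<bar>B\<bar> + exp \<bar>B\<bar>) / 2"
  proof -
    have "k^2 + s^2 - c * s^2 \<le> exp \<bar>B\<bar> + exp \<bar>B\<bar>"
      using k2_le[of B] s2_le[of B] assms unfolding s_def[symmetric] k_def[symmetric]
      by (smt (verit) mult_nonneg_nonneg zero_le_power2)
    then show ?thesis using assms by (intro divide_right_mono mult_left_mono) auto
  qed
  also have "\<dots> = c * exp \<bar>B\<bar>" by simp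
  finally show "Fdc c B \<le> c * exp \<bar>B\<bar>" .
  have "(1 + c * s^2)^2 \<le> (k^2)^2"
    using kk assms mult_right_mono[of c 1 "s^2"] by (intro power_mono) auto
  also have "(k^2)^2 \<le> (exp \<bar>B\<bar>)^2" using k2_le[of B] unfolding k_def[symmetric] by (intro power_mono) auto
  also have "(exp \<bar>B\<bar>)^2 = exp (2 * \<bar>B\<bar>)" by (simp add: power2_eq_square flip: exp_add)
  finally have den: "(1 + c * s^2)^2 \<le> exp (2 * \<bar>B\<bar>)" .
  have "c / (2 * exp (2 * \<bar>B\<bar>)) \<le> c / (2 * (1 + c * s^2)^2)"
  proof (rule divide_left_mono)
    show "0 < 2 * exp (2 * \<bar>B\<bar>) * (2 * (1 + c * s^2)^2)" using dsq by (intro mult_pos_pos) auto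
  qed (use den assms in auto)
  also have "\<dots> \<le> c * (k^2 + s^2 - c * s^2) / (2 * (1 + c * s^2)^2)"
    using n0 k1 assms dsq by (intro divide_right_mono) (auto simp: mult_le_cancel_left1)
  finally show "c / (2 * exp (2 * \<bar>B\<bar>)) \<le> Fdc c B" unfolding F .
qed

lemma F_lower:
  assumes "0 < c" "0 \<le> B" "0 < X" "X \<le> c * (cosh (B/2))^2"
  shows "(exp B - 1) / (exp B + 1) - 1 / X \<le> Fc c B"
proof -
  define s where "s = sinh (B/2)"
  define k where "k = cosh (B/2)"
  have kk: "k^2 = s^2 + 1" unfolding s_def k_def by (rule ksq)
  have k1: "k \<ge> 1" unfolding k_def by (rule cosh_real_ge_1)
  have s0: "s \<ge> 0" unfolding s_def using assms by simp
  have sk: "s \<le> k" unfolding s_def k_def by (rule sinh_le_cosh_real)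
  define a where "a = c * k^2"
  have aX: "X \<le> a" using assms by (simp add: a_def k_def)
  have a0: "a > 0" using aX assms by simp
  have tanh: "(exp B - 1) / (exp B + 1) = s / k"
  proof -
    define E where "E = exp (B/2)"
    have E0: "E > 0" by (simp add: E_def)
    have s': "s = (E*E - 1) / (2*E)" unfolding s_def E_def sinh_def using E0 by (simp add: exp_minus field_simps)
    have k': "k = (E*E + 1) / (2*E)" unfolding k_def E_def cosh_def using E0 by (simp add: exp_minus field_simps)
    have "exp B = E * E" unfolding E_def by (simp flip: exp_add)
    moreover have "E * E > 0" using E0 by simp
    then have nz: "E * E + 1 \<noteq> 0" "1 + E * E \<noteq> 0" by simp_all
    ultimately have X: "(exp B - 1) / (exp B + 1) = (E*E - 1) / (E*E + 1)" by simp
    have "(E*E - 1) / (E*E + 1) * k = ((E*E + 1) * (E*E - 1)) / ((E*E + 1) * (2*E))"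
      unfolding k' by (simp add: mult.commute)
    also have "\<dots> = s" unfolding s' by (rule nonzero_mult_divide_mult_cancel_left[OF nz(1)])
    finally have "(exp B - 1) / (exp B + 1) * k = s" unfolding X .
    then show ?thesis using k_def cosh_real_pos[of "B/2"] by (simp add: field_simps)
  qed
  have "c * s * k / (1 + c * s^2) \<ge> c * s * k / (1 + c * k^2)"
  proof (rule divide_left_mono)
    show "1 + c * s^2 \<le> 1 + c * k^2" using sk s0 assms by (auto intro!: mult_left_mono power_mono)
    show "0 \<le> c * s * k" using assms s0 k1 by simp
    show "0 < (1 + c * k^2) * (1 + c * s^2)" using assms by (simp add: add_pos_nonneg)
  qed
  moreover have "c * s * k / (1 + c * k^2) = s / k - s / (k * (1 + a))"
  proof -
    have p1: "1 + c * k^2 > 0" using assms by (simp add: add_pos_nonneg)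
    have p2: "k > 0" using k1 by simp
    have p3: "k + c * (k * k^2) > 0"
    proof -
      have "k * (1 + c * k^2) > 0" using p1 p2 by simp
      then show ?thesis by (simp add: algebra_simps)
    qed
    show ?thesis using p1 p2 p3 by (simp add: a_def field_simps) (simp add: algebra_simps eval_nat_numeral)
  qed
  moreover have "s / (k * (1 + a)) \<le> 1 / X"
  proof -
    have "s / (k * (1 + a)) \<le> k / (k * (1 + a))" using sk a0 k1 by (intro divide_right_mono) auto
    also have "\<dots> = 1 / (1 + a)" using k1 by simp
    also have "\<dots> \<le> 1 / X" using aX assms by (intro divide_left_mono) auto
    finally show ?thesis .
  qed
  ultimately show ?thesis unfolding tanh Fc_def s_def[symmetric] k_def[symmetric] by linarith
qed



definition cc :: "real \<Rightarrow> real" where "cc \<eta> = erfc \<eta> * erfc (- \<eta>)"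

lemma cc_nonneg: "cc \<eta> \<ge> 0" unfolding cc_def by (simp add: erfc_nonneg)

lemma cc_le1: "cc \<eta> \<le> 1"
proof -
  have "cc \<eta> = 1 - (1 - erfc \<eta>)^2" unfolding cc_def erfc_sym by (simp add: power2_eq_square algebra_simps)
  then show ?thesis by simp
qed

lemma cc_cont: "continuous_on S cc"
  unfolding cc_def[abs_def] by (intro continuous_intros erfc_cont continuous_on_compose2[OF erfc_cont]) auto

lemma cc_upper: assumes "\<eta> \<ge> 0" shows "cc \<eta> \<le> 4 * exp (1/4) * exp (- (\<eta>^2))"
proof -
  have "cc \<eta> \<le> erfc \<eta> * 2" unfolding cc_def using erfc_le2[of "-\<eta>"] erfc_nonneg[of \<eta>] by (intro mult_left_mono) auto
  also have "\<dots> \<le> 2 * exp (1/4) * exp (- (\<eta>^2)) * 2" using erfc_upper[OF assms] by (intro mult_right_mono) auto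
  finally show ?thesis by simp
qed

lemma cc_lower: assumes "\<eta> \<ge> 0" shows "cc \<eta> \<ge> exp (- ((\<eta> + 1)^2))"
proof -
  have "erfc (- \<eta>) \<ge> 1" using erfc_le1[OF assms] erfc_sym[of \<eta>] by simp
  then have "erfc \<eta> * 1 \<le> cc \<eta>" unfolding cc_def using erfc_nonneg[of \<eta>] by (intro mult_left_mono) auto
  then show ?thesis using erfc_lower[OF assms] by simp
qed

lemma den_ne [simp]: "1 + x^2 * cc \<eta> \<noteq> 0" "1 + cc \<eta> * x^2 \<noteq> 0"
  "0 < 1 + x^2 * cc \<eta>" "0 < 1 + cc \<eta> * x^2"
proof -
  have "0 \<le> x^2 * cc \<eta>" using cc_nonneg[of \<eta>] by simp
  then show "1 + x^2 * cc \<eta> \<noteq> 0" "1 + cc \<eta> * x^2 \<noteq> 0"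
    "0 < 1 + x^2 * cc \<eta>" "0 < 1 + cc \<eta> * x^2" by (simp_all add: mult.commute)
qed

definition Kc :: real where "Kc = 4 * exp (1/4) * exp (1/4)"

lemma cc_exp: assumes "\<eta> \<ge> 0" shows "cc \<eta> \<le> Kc * exp (- \<eta>)"
proof -
  have "cc \<eta> \<le> 4 * exp (1/4) * exp (- (\<eta>^2))" by (rule cc_upper[OF assms])
  also have "\<dots> \<le> 4 * exp (1/4) * (exp (1/4) * exp (- \<eta>))" using g_le_exp[of \<eta>] by (intro mult_left_mono) auto
  finally show ?thesis by (simp add: Kc_def)
qed

lemma int_dom0:
  fixes h :: "real \<Rightarrow> real"
  assumes "a \<ge> 0" "continuous_on {a..} h" "\<And>\<eta>. \<eta> \<ge> a \<Longrightarrow> \<bar>h \<eta>\<bar> \<le> M * cc \<eta>" "M \<ge> 0"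
  shows "h integrable_on {a..}"
proof (rule dom_int[where k="\<lambda>\<eta>. (M * Kc) * exp (- \<eta>)"])
  show "closed {a..}" by simp
  show "continuous_on {a..} h" by fact
  show "(\<lambda>\<eta>. (M * Kc) * exp (- \<eta>)) integrable_on {a..}" by (rule exp_int)
  fix x assume x: "x \<in> {a..}"
  have "\<bar>h x\<bar> \<le> M * cc x" using assms(3) x by simp
  also have "\<dots> \<le> M * (Kc * exp (- x))" using cc_exp[of x] x assms by (intro mult_left_mono) auto
  finally show "\<bar>h x\<bar> \<le> M * Kc * exp (- x)" by simp
qed

lemma cc_int: assumes "a \<ge> 0" shows "cc integrable_on {a..}"
  by (rule int_dom0[where M=1]) (use assms cc_cont cc_nonneg in auto)

lemma L_int: assumes "a \<ge> 0" shows "(\<lambda>\<eta>. Lc (cc \<eta>) B) integrable_on {a..}"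
proof (rule int_dom0[where M="exp \<bar>B\<bar>"])
  show "continuous_on {a..} (\<lambda>\<eta>. Lc (cc \<eta>) B)"
    unfolding Lc_def using cc_nonneg
    by (intro continuous_intros cc_cont) (auto intro!: add_pos_nonneg)
  fix \<eta> show "\<bar>Lc (cc \<eta>) B\<bar> \<le> exp \<bar>B\<bar> * cc \<eta>"
    using L_bounds[OF cc_nonneg, of \<eta> B] by (simp add: mult.commute)
qed (use assms in auto)

lemma F_cont: "continuous_on S (\<lambda>\<eta>. Fc (cc \<eta>) B)"
  unfolding Fc_def using cc_nonneg
  by (intro continuous_intros cc_cont) (auto simp: add_pos_nonneg)

lemma F_int: assumes "a \<ge> 0" shows "(\<lambda>\<eta>. Fc (cc \<eta>) B) integrable_on {a..}"
proof (rule int_dom0[where M="exp \<bar>B\<bar>"])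
  show "continuous_on {a..} (\<lambda>\<eta>. Fc (cc \<eta>) B)" by (rule F_cont)
  fix \<eta> show "\<bar>Fc (cc \<eta>) B\<bar> \<le> exp \<bar>B\<bar> * cc \<eta>"
    using F_abs[OF cc_nonneg, of \<eta> B] by (simp add: mult.commute)
qed (use assms in auto)

definition D :: "real \<Rightarrow> real" where "D B = integral {0..} (\<lambda>\<eta>. Fc (cc \<eta>) B)"
definition Cint :: real where "Cint = integral {0..} cc"

lemma Ifun_eq: "Ifun B = integral {0..} (\<lambda>\<eta>. Lc (cc \<eta>) B)"
  unfolding Ifun_def Lc_def cc_def by (simp add: mult.assoc)

lemma Cint_pos: "Cint \<ge> exp (- 4)"
proof -
  have "integral {0..1} (\<lambda>\<eta>::real. exp (- 4)) \<le> integral {0..1} cc"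
  proof (rule integral_le)
    show "(\<lambda>\<eta>::real. exp (- 4)) integrable_on {0..1}" by (rule integrable_continuous_interval) (rule continuous_on_const)
    show "cc integrable_on {0..1}" by (rule integrable_continuous_interval[OF cc_cont])
    fix \<eta> :: real assume e: "\<eta> \<in> {0..1}"
    then have "(\<eta> + 1)^2 \<le> 2^2" by (intro power_mono) auto
    then have "exp (- 4) \<le> exp (- ((\<eta> + 1)^2))" by simp
    also have "\<dots> \<le> cc \<eta>" using e by (intro cc_lower) auto
    finally show "exp (- 4) \<le> cc \<eta>" .
  qed
  also have "\<dots> \<le> Cint" unfolding Cint_def
    by (rule integral_subset_le) (auto intro: cc_int integrable_continuous_interval[OF cc_cont] cc_nonneg)
  finally show ?thesis by simp
qed



lemma lip:
  fixes \<phi> \<phi>' :: "real \<Rightarrow> real"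
  assumes d: "\<And>t. min a b \<le> t \<Longrightarrow> t \<le> max a b \<Longrightarrow> (\<phi> has_real_derivative \<phi>' t) (at t)"
    and bd: "\<And>t. min a b \<le> t \<Longrightarrow> t \<le> max a b \<Longrightarrow> \<bar>\<phi>' t\<bar> \<le> M"
  shows "\<bar>\<phi> b - \<phi> a\<bar> \<le> M * \<bar>b - a\<bar>"
proof (cases a b rule: linorder_cases)
  case less
  have "\<And>x. a \<le> x \<Longrightarrow> x \<le> b \<Longrightarrow> (\<phi> has_real_derivative \<phi>' x) (at x)" using d less by auto
  from MVT2[OF less this] obtain z where z: "a < z" "z < b" "\<phi> b - \<phi> a = (b - a) * \<phi>' z" by blast
  have "\<bar>\<phi> b - \<phi> a\<bar> = \<bar>b - a\<bar> * \<bar>\<phi>' z\<bar>" by (simp add: z abs_mult)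
  also have "\<dots> \<le> \<bar>b - a\<bar> * M" using bd[of z] z less by (intro mult_left_mono) auto
  finally show ?thesis by (simp add: mult.commute)
next
  case equal then show ?thesis by simp
next
  case greater
  have "\<And>x. b \<le> x \<Longrightarrow> x \<le> a \<Longrightarrow> (\<phi> has_real_derivative \<phi>' x) (at x)" using d greater by auto
  from MVT2[OF greater this] obtain z where z: "b < z" "z < a" "\<phi> a - \<phi> b = (a - b) * \<phi>' z" by blast
  have "\<bar>\<phi> b - \<phi> a\<bar> = \<bar>(a - b) * \<phi>' z\<bar>" using z(3) by (metis abs_minus_commute)
  also have "\<dots> = \<bar>a - b\<bar> * \<bar>\<phi>' z\<bar>" by (rule abs_mult)
  also have "\<dots> \<le> \<bar>a - b\<bar> * M" using bd[of z] z greater by (intro mult_left_mono) auto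
  finally show ?thesis by (simp add: mult.commute abs_minus_commute)
qed

lemma F_lip:
  assumes "0 \<le> c" "c \<le> 1" "\<bar>t - B\<bar> \<le> 1"
  shows "\<bar>Fc c t - Fc c B\<bar> \<le> c * exp (\<bar>B\<bar> + 1) * \<bar>t - B\<bar>"
proof (rule lip[where \<phi>'="Fdc c"])
  fix u assume u: "min B t \<le> u" "u \<le> max B t"
  show "(Fc c has_real_derivative Fdc c u) (at u)" by (rule F_deriv[OF assms(1)])
  have "\<bar>u\<bar> \<le> \<bar>B\<bar> + 1" using u assms(3) by (cases "B \<le> t") (auto simp: abs_le_iff)
  then have "exp \<bar>u\<bar> \<le> exp (\<bar>B\<bar> + 1)" by simp
  then have "c * exp \<bar>u\<bar> \<le> c * exp (\<bar>B\<bar> + 1)" using assms by (intro mult_left_mono) auto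
  then show "\<bar>Fdc c u\<bar> \<le> c * exp (\<bar>B\<bar> + 1)" using Fd_bounds[OF assms(1,2), of u] by simp
qed

lemma L_taylor:
  assumes "0 \<le> c" "c \<le> 1" "\<bar>h\<bar> \<le> 1"
  shows "\<bar>Lc c (B + h) - Lc c B - h * Fc c B\<bar> \<le> c * exp (\<bar>B\<bar> + 1) * h^2"
proof -
  define \<psi> where "\<psi> t = Lc c t - t * Fc c B" for t
  have "\<bar>\<psi> (B + h) - \<psi> B\<bar> \<le> (c * exp (\<bar>B\<bar> + 1) * \<bar>h\<bar>) * \<bar>(B + h) - B\<bar>"
  proof (rule lip[where \<phi>'="\<lambda>t. Fc c t - Fc c B"])
    fix t assume t: "min B (B + h) \<le> t" "t \<le> max B (B + h)"
    show "(\<psi> has_real_derivative Fc c t - Fc c B) (at t)"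
    proof -
      have "((\<lambda>t. t * Fc c B) has_real_derivative 1 * Fc c B) (at t)"
        by (intro derivative_eq_intros) auto
      then show ?thesis unfolding \<psi>_def using L_deriv[OF assms(1), of t] by (intro DERIV_diff) auto
    qed
    have tb: "\<bar>t - B\<bar> \<le> \<bar>h\<bar>" using t by (cases "h \<ge> 0") (auto simp: abs_le_iff)
    have "\<bar>Fc c t - Fc c B\<bar> \<le> c * exp (\<bar>B\<bar> + 1) * \<bar>t - B\<bar>"
      by (rule F_lip[OF assms(1,2)]) (use tb assms(3) in linarith)
    also have "\<dots> \<le> c * exp (\<bar>B\<bar> + 1) * \<bar>h\<bar>" using tb assms by (intro mult_left_mono) auto
    finally show "\<bar>Fc c t - Fc c B\<bar> \<le> c * exp (\<bar>B\<bar> + 1) * \<bar>h\<bar>" .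
  qed
  moreover have "\<psi> (B + h) - \<psi> B = Lc c (B + h) - Lc c B - h * Fc c B" by (simp add: \<psi>_def algebra_simps)
  ultimately show ?thesis by (simp add: power2_eq_square abs_mult_self mult.assoc)
qed

lemma Ifun_taylor:
  assumes "\<bar>h\<bar> \<le> 1"
  shows "\<bar>Ifun (B + h) - Ifun B - h * D B\<bar> \<le> exp (\<bar>B\<bar> + 1) * Cint * h^2"
proof -
  let ?L1 = "\<lambda>\<eta>. Lc (cc \<eta>) (B + h)" and ?L0 = "\<lambda>\<eta>. Lc (cc \<eta>) B" and ?F = "\<lambda>\<eta>. h * Fc (cc \<eta>) B"
  have i1: "?L1 integrable_on {0..}" "?L0 integrable_on {0..}" by (intro L_int; simp)+
  have i2: "?F integrable_on {0..}" by (intro integrable_on_mult_right F_int) simp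
  have i3: "(\<lambda>\<eta>. ?L1 \<eta> - ?L0 \<eta>) integrable_on {0..}" using i1 by (rule integrable_diff)
  have i4: "(\<lambda>\<eta>. ?L1 \<eta> - ?L0 \<eta> - ?F \<eta>) integrable_on {0..}" using i3 i2 by (rule integrable_diff)
  have eq: "integral {0..} (\<lambda>\<eta>. ?L1 \<eta> - ?L0 \<eta> - ?F \<eta>) = Ifun (B + h) - Ifun B - h * D B"
    unfolding integral_diff[OF i3 i2] integral_diff[OF i1] Ifun_eq D_def
    using F_int[of 0 B] by simp
  have ig: "(\<lambda>\<eta>. (exp (\<bar>B\<bar> + 1) * h^2) * cc \<eta>) integrable_on {0..}"
    by (intro integrable_on_mult_right cc_int) simp
  have "norm (integral {0..} (\<lambda>\<eta>. ?L1 \<eta> - ?L0 \<eta> - ?F \<eta>)) \<le> integral {0..} (\<lambda>\<eta>. (exp (\<bar>B\<bar> + 1) * h^2) * cc \<eta>)"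
  proof (rule integral_norm_bound_integral[OF i4 ig])
    fix \<eta> :: real
    have "\<bar>?L1 \<eta> - ?L0 \<eta> - ?F \<eta>\<bar> \<le> cc \<eta> * exp (\<bar>B\<bar> + 1) * h^2"
      by (rule L_taylor[OF cc_nonneg cc_le1 assms])
    then show "norm (?L1 \<eta> - ?L0 \<eta> - ?F \<eta>) \<le> (exp (\<bar>B\<bar> + 1) * h^2) * cc \<eta>" by (simp add: mult_ac)
  qed
  also have "\<dots> = exp (\<bar>B\<bar> + 1) * h^2 * Cint" unfolding Cint_def using cc_int[of 0] by simp
  finally show ?thesis unfolding eq by (simp add: mult_ac)
qed

lemma Ifun_deriv: "(Ifun has_real_derivative D B) (at B)"
proof -
  define E where "E = exp (\<bar>B\<bar> + 1) * Cint"
  define q where "q h = (Ifun (B + h) - Ifun B) / h - D B" for h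
  have "(q \<longlongrightarrow> 0) (at 0)"
  proof (rule Lim_null_comparison)
    have bnd: "\<bar>q h\<bar> \<le> E * \<bar>h\<bar>" if h1: "\<bar>h\<bar> \<le> 1" "h \<noteq> 0" for h
    proof -
      have "q h = (Ifun (B + h) - Ifun B - h * D B) / h" using h1 by (simp add: q_def field_simps)
      then have "\<bar>q h\<bar> = \<bar>Ifun (B + h) - Ifun B - h * D B\<bar> / \<bar>h\<bar>" by simp
      also have "\<dots> \<le> E * h^2 / \<bar>h\<bar>"
        using Ifun_taylor[OF h1(1), of B] h1 by (intro divide_right_mono) (auto simp: E_def)
      also have "\<dots> = E * \<bar>h\<bar>"
        using h1 by (cases "h \<ge> 0") (simp_all add: power2_eq_square)
      finally show "\<bar>q h\<bar> \<le> E * \<bar>h\<bar>" .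
    qed
    show "\<forall>\<^sub>F h in at 0. norm (q h) \<le> E * \<bar>h\<bar>"
      unfolding eventually_at by (rule exI[of _ 1]) (auto intro!: bnd)
    show "((\<lambda>h. E * \<bar>h\<bar>) \<longlongrightarrow> 0) (at 0)"
      proof -
      have "((\<lambda>h. E * \<bar>h\<bar>) \<longlongrightarrow> E * \<bar>0\<bar>) (at (0::real))" by (intro tendsto_intros)
      then show ?thesis by simp
    qed
  qed
  then have "((\<lambda>h. q h + D B) \<longlongrightarrow> 0 + D B) (at 0)" by (intro tendsto_intros)
  then show ?thesis unfolding DERIV_def q_def by simp
qed

lemma D_lip:
  assumes "\<bar>h\<bar> \<le> 1"
  shows "\<bar>D (B + h) - D B\<bar> \<le> exp (\<bar>B\<bar> + 1) * Cint * \<bar>h\<bar>"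
proof -
  have i: "(\<lambda>\<eta>. Fc (cc \<eta>) (B + h) - Fc (cc \<eta>) B) integrable_on {0..}"
    by (intro integrable_diff F_int) auto
  have eq: "integral {0..} (\<lambda>\<eta>. Fc (cc \<eta>) (B + h) - Fc (cc \<eta>) B) = D (B + h) - D B"
    unfolding D_def by (intro integral_diff F_int) auto
  have ig: "(\<lambda>\<eta>. (exp (\<bar>B\<bar> + 1) * \<bar>h\<bar>) * cc \<eta>) integrable_on {0..}"
    by (intro integrable_on_mult_right cc_int) simp
  have "norm (integral {0..} (\<lambda>\<eta>. Fc (cc \<eta>) (B + h) - Fc (cc \<eta>) B)) \<le> integral {0..} (\<lambda>\<eta>. (exp (\<bar>B\<bar> + 1) * \<bar>h\<bar>) * cc \<eta>)"
  proof (rule integral_norm_bound_integral[OF i ig])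
    fix \<eta> :: real
    have "\<bar>Fc (cc \<eta>) (B + h) - Fc (cc \<eta>) B\<bar> \<le> cc \<eta> * exp (\<bar>B\<bar> + 1) * \<bar>B + h - B\<bar>"
      by (rule F_lip[OF cc_nonneg cc_le1]) (use assms in simp)
    then show "norm (Fc (cc \<eta>) (B + h) - Fc (cc \<eta>) B) \<le> (exp (\<bar>B\<bar> + 1) * \<bar>h\<bar>) * cc \<eta>" by (simp add: mult_ac)
  qed
  also have "\<dots> = exp (\<bar>B\<bar> + 1) * \<bar>h\<bar> * Cint" unfolding Cint_def using cc_int[of 0] by simp
  finally show ?thesis unfolding eq by (simp add: mult_ac)
qed

lemma D_cont: "continuous_on S D"
proof -
  have "isCont D B" for B
  proof -
    define E where "E = exp (\<bar>B\<bar> + 1) * Cint"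
    have "((\<lambda>h. D (B + h) - D B) \<longlongrightarrow> 0) (at 0)"
    proof (rule Lim_null_comparison)
      show "\<forall>\<^sub>F h in at 0. norm (D (B + h) - D B) \<le> E * \<bar>h\<bar>"
        unfolding eventually_at
        by (rule exI[of _ 1]) (auto simp: E_def D_lip)
      show "((\<lambda>h. E * \<bar>h\<bar>) \<longlongrightarrow> 0) (at 0)"
        proof -
      have "((\<lambda>h. E * \<bar>h\<bar>) \<longlongrightarrow> E * \<bar>0\<bar>) (at (0::real))" by (intro tendsto_intros)
      then show ?thesis by simp
    qed
    qed
    then have "((\<lambda>h. D (B + h) - D B + D B) \<longlongrightarrow> 0 + D B) (at 0)" by (intro tendsto_intros)
    then show ?thesis unfolding isCont_iff by simp
  qed
  then show ?thesis by (simp add: continuous_at_imp_continuous_on)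
qed

lemma D_0: "D 0 = 0" unfolding D_def Fc_def by simp

lemma D_strict:
  assumes "0 \<le> B1" "B1 < B2"
  shows "D B2 - D B1 \<ge> (B2 - B1) / (2 * exp (2 * B2)) * Cint"
proof -
  have pt: "(B2 - B1) / (2 * exp (2 * B2)) * cc \<eta> \<le> Fc (cc \<eta>) B2 - Fc (cc \<eta>) B1" for \<eta>
  proof -
    let ?c = "cc \<eta>"
    have "\<And>x. B1 \<le> x \<Longrightarrow> x \<le> B2 \<Longrightarrow> (Fc ?c has_real_derivative Fdc ?c x) (at x)"
      using F_deriv[OF cc_nonneg] by blast
    from MVT2[OF assms(2) this] obtain z where z: "B1 < z" "z < B2" "Fc ?c B2 - Fc ?c B1 = (B2 - B1) * Fdc ?c z" by blast
    have "?c / (2 * exp (2 * B2)) \<le> ?c / (2 * exp (2 * \<bar>z\<bar>))"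
      using z assms cc_nonneg[of \<eta>] by (intro divide_left_mono mult_pos_pos) auto
    also have "\<dots> \<le> Fdc ?c z" by (rule Fd_bounds[OF cc_nonneg cc_le1])
    finally have "(B2 - B1) * (?c / (2 * exp (2 * B2))) \<le> (B2 - B1) * Fdc ?c z"
      using assms by (intro mult_left_mono) auto
    then show ?thesis using z by simp
  qed
  have "integral {0..} (\<lambda>\<eta>. (B2 - B1) / (2 * exp (2 * B2)) * cc \<eta>) \<le> integral {0..} (\<lambda>\<eta>. Fc (cc \<eta>) B2 - Fc (cc \<eta>) B1)"
  proof (rule integral_le)
    show "(\<lambda>\<eta>. (B2 - B1) / (2 * exp (2 * B2)) * cc \<eta>) integrable_on {0..}"
      by (intro integrable_on_mult_right cc_int) simp
    show "(\<lambda>\<eta>. Fc (cc \<eta>) B2 - Fc (cc \<eta>) B1) integrable_on {0..}"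
      by (intro integrable_diff F_int) simp_all
    fix \<eta> :: real assume "\<eta> \<in> {0..}"
    show "(B2 - B1) / (2 * exp (2 * B2)) * cc \<eta> \<le> Fc (cc \<eta>) B2 - Fc (cc \<eta>) B1" by (rule pt)
  qed
  also have "\<dots> = D B2 - D B1" unfolding D_def by (intro integral_diff F_int) auto
  finally show ?thesis unfolding Cint_def using cc_int[of 0] by simp
qed



lemma D_upper:
  assumes "B \<ge> 1"
  shows "D B \<le> sqrt B + 4 * exp (1/4)"
proof -
  define r where "r = sqrt B"
  have r1: "r \<ge> 1" using assms by (simp add: r_def)
  have rB: "r^2 = B" using assms by (simp add: r_def)
  let ?F = "\<lambda>\<eta>. Fc (cc \<eta>) B"
  have sp: "D B = integral {0..r} ?F + integral {r..} ?F"
    unfolding D_def using r1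
    by (intro split_Ici integrable_continuous_interval F_cont F_int) auto
  have I1: "integral {0..r} ?F \<le> r"
  proof -
    have "integral {0..r} ?F \<le> integral {0..r} (\<lambda>\<eta>. 1::real)"
      by (rule integral_le) (auto intro!: integrable_continuous_interval F_cont F_le1 cc_nonneg cc_le1)
    also have "\<dots> = r" using r1 by simp
    finally show ?thesis .
  qed
  define C where "C = 4 * exp (1/4) * exp r"
  have hi: "((\<lambda>\<eta>. C * exp (- 1 * \<eta>)) has_integral (C * (exp (- 1 * r) / 1))) {r..}"
    by (intro has_integral_mult_right has_integral_exp_minus_to_infinity) simp
  have I2: "integral {r..} ?F \<le> 4 * exp (1/4)"
  proof -
    have "integral {r..} ?F \<le> integral {r..} (\<lambda>\<eta>. C * exp (- 1 * \<eta>))"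
    proof (rule integral_le)
      show "?F integrable_on {r..}" using r1 by (intro F_int) simp
      show "(\<lambda>\<eta>. C * exp (- 1 * \<eta>)) integrable_on {r..}" using hi by blast
      fix \<eta> assume e: "\<eta> \<in> {r..}"
      then have e0: "\<eta> \<ge> 0" "\<eta> \<ge> r" using r1 by auto
      have "?F \<eta> \<le> cc \<eta> * exp B" using F_abs[OF cc_nonneg, of \<eta> B] assms by simp
      also have "\<dots> \<le> (4 * exp (1/4) * exp (- (\<eta>^2))) * exp B"
        using cc_upper[OF e0(1)] assms by (intro mult_right_mono) auto
      also have "\<dots> = 4 * exp (1/4) * exp (B - \<eta>^2)" by (simp add: exp_diff exp_minus field_simps)
      also have "\<dots> \<le> 4 * exp (1/4) * exp (r + - 1 * \<eta>)"
      proof -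
        have "(\<eta> - r) * (\<eta> + r) \<ge> (\<eta> - r) * 1" using e0 r1 by (intro mult_left_mono) auto
        then have "B - \<eta>^2 \<le> r + - 1 * \<eta>" unfolding rB[symmetric] by (simp add: power2_eq_square algebra_simps)
        then show ?thesis by simp
      qed
      also have "\<dots> = C * exp (- 1 * \<eta>)" by (simp add: C_def exp_add exp_diff exp_minus field_simps)
      finally show "?F \<eta> \<le> C * exp (- 1 * \<eta>)" .
    qed
    also have "\<dots> = C * exp (- r)" using integral_unique[OF hi] by simp
    also have "\<dots> = 4 * exp (1/4)" by (simp add: C_def flip: exp_add)
    finally show ?thesis .
  qed
  show ?thesis using sp I1 I2 by (simp add: r_def)
qed

lemma cosh_sq_ge: "(cosh (B/2))^2 \<ge> exp B / 4" for B :: real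
proof -
  have "cosh (B/2) = (exp (B/2) + exp (- (B/2))) / 2" by (simp add: cosh_def)
  then have c: "cosh (B/2) \<ge> exp (B/2) / 2" by simp
  have "(exp (B/2) / 2)^2 \<le> (cosh (B/2))^2" using c by (intro power_mono) auto
  moreover have "(exp (B/2) / 2)^2 = exp B / 4" by (simp add: power2_eq_square flip: exp_add)
  ultimately show ?thesis by simp
qed

lemma D_lower:
  assumes "B \<ge> 4"
  shows "D B \<ge> (sqrt (B - sqrt B) - 1) * ((exp B - 1) / (exp B + 1) - 4 * exp (- sqrt B))"
proof -
  define T where "T = sqrt (B - sqrt B) - 1"
  define K where "K = (exp B - 1) / (exp B + 1) - 4 * exp (- sqrt B)"
  have B0: "B \<ge> 0" using assms by simp
  have "sqrt 4 \<le> sqrt B" using assms by (rule real_sqrt_le_mono)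
  then have sB: "sqrt B \<ge> 2" by simp
  have BsB: "B - sqrt B \<ge> 1"
  proof -
    have "sqrt B * sqrt B = B" using B0 by simp
    moreover have "sqrt B * sqrt B \<ge> sqrt B * 2" using sB by (intro mult_left_mono) linarith+
    ultimately show ?thesis using sB by linarith
  qed
  have T0: "T \<ge> 0" using BsB by (simp add: T_def)
  have T1sq: "(T + 1)^2 = B - sqrt B" using BsB by (simp add: T_def)
  let ?F = "\<lambda>\<eta>. Fc (cc \<eta>) B"
  have "integral {0..T} (\<lambda>\<eta>. K) \<le> integral {0..T} ?F"
  proof (rule integral_le)
    show "(\<lambda>\<eta>. K) integrable_on {0..T}" by (rule integrable_continuous_interval) (rule continuous_on_const)
    show "?F integrable_on {0..T}" by (intro integrable_continuous_interval F_cont)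
    fix \<eta> assume e: "\<eta> \<in> {0..T}"
    have sq: "(\<eta> + 1)^2 \<le> (T + 1)^2" using e by (intro power_mono) auto
    have ccl: "cc \<eta> \<ge> exp (sqrt B - B)"
    proof -
      have "exp (sqrt B - B) \<le> exp (- ((\<eta> + 1)^2))" using sq T1sq by simp
      also have "\<dots> \<le> cc \<eta>" using e by (intro cc_lower) auto
      finally show ?thesis .
    qed
    have cpos: "cc \<eta> > 0" using ccl by (rule less_le_trans[rotated]) simp
    have "exp (sqrt B) / 4 = exp (sqrt B - B) * (exp B / 4)" by (simp add: exp_diff)
    also have "\<dots> \<le> cc \<eta> * (cosh (B/2))^2"
      using ccl cosh_sq_ge[of B] cc_nonneg[of \<eta>] by (intro mult_mono) auto
    finally have X: "exp (sqrt B) / 4 \<le> cc \<eta> * (cosh (B/2))^2" .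
    have "(exp B - 1) / (exp B + 1) - 1 / (exp (sqrt B) / 4) \<le> ?F \<eta>"
      by (rule F_lower[OF cpos _ _ X]) (use assms in auto)
    moreover have "1 / (exp (sqrt B) / 4) = 4 * exp (- sqrt B)" by (simp add: exp_minus field_simps)
    ultimately show "K \<le> ?F \<eta>" by (simp add: K_def)
  qed
  also have "\<dots> \<le> D B" unfolding D_def
  proof (rule integral_subset_le)
    show "{0..T} \<subseteq> {0..}" by auto
    show "?F integrable_on {0..T}" by (intro integrable_continuous_interval F_cont)
    show "?F integrable_on {0..}" by (intro F_int) simp
    show "\<forall>x\<in>{0..}. 0 \<le> ?F x" using assms by (auto intro: F_nonneg cc_nonneg)
  qed
  finally show ?thesis using T0 by (simp add: T_def K_def)
qed

lemma lowb_lim: "((\<lambda>B::real. (sqrt (B - sqrt B) - 1) * ((exp B - 1) / (exp B + 1) - 4 * exp (- sqrt B)) / sqrt B) \<longlongrightarrow> 1) at_top"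
  by real_asymp

lemma upb_lim: "((\<lambda>B::real. (sqrt B + 4 * exp (1/4)) / sqrt B) \<longlongrightarrow> 1) at_top"
  by real_asymp

lemma lowb_top: "filterlim (\<lambda>B::real. (sqrt (B - sqrt B) - 1) * ((exp B - 1) / (exp B + 1) - 4 * exp (- sqrt B))) at_top at_top"
  by real_asymp

lemma D_asym: "((\<lambda>B. D B / sqrt B) \<longlongrightarrow> 1) at_top"
proof (rule tendsto_sandwich[OF _ _ lowb_lim upb_lim])
  show "\<forall>\<^sub>F B in at_top. (sqrt (B - sqrt B) - 1) * ((exp B - 1) / (exp B + 1) - 4 * exp (- sqrt B)) / sqrt B \<le> D B / sqrt B"
    using eventually_ge_at_top[of 4] by eventually_elim (intro divide_right_mono D_lower, auto)
  show "\<forall>\<^sub>F B in at_top. D B / sqrt B \<le> (sqrt B + 4 * exp (1/4)) / sqrt B"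
    using eventually_ge_at_top[of 1] by eventually_elim (intro divide_right_mono D_upper, auto)
qed

lemma D_top: "filterlim D at_top at_top"
proof (rule filterlim_at_top_mono[OF lowb_top])
  show "\<forall>\<^sub>F x in at_top. (sqrt (x - sqrt x) - 1) * ((exp x - 1) / (exp x + 1) - 4 * exp (- sqrt x)) \<le> D x"
    using eventually_ge_at_top[of "4::real"] by eventually_elim (rule D_lower)
qed



lemma I_asym: "((\<lambda>B. Ifun B / (B * sqrt B)) \<longlongrightarrow> 2/3) at_top"
proof (rule lhospital_at_top_at_top[where f'=D and g'="\<lambda>B. 3/2 * sqrt B"])
  show "filterlim (\<lambda>B::real. B * sqrt B) at_top at_top" by real_asymp
  show "\<forall>\<^sub>F x in at_top. 3 / 2 * sqrt x \<noteq> 0"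
    using eventually_gt_at_top[of "0::real"] by eventually_elim simp
  show "\<forall>\<^sub>F x in at_top. (Ifun has_real_derivative D x) (at x)"
    by (simp add: Ifun_deriv)
  show "\<forall>\<^sub>F x in at_top. ((\<lambda>B. B * sqrt B) has_real_derivative 3 / 2 * sqrt x) (at x)"
    using eventually_gt_at_top[of "0::real"]
  proof eventually_elim
    case (elim x)
    have "((\<lambda>B. B * sqrt B) has_real_derivative 1 * sqrt x + (inverse (sqrt x) / 2) * x) (at x)"
      using elim by (intro DERIV_mult DERIV_ident DERIV_real_sqrt) simp
    moreover have "1 * sqrt x + (inverse (sqrt x) / 2) * x = 3 / 2 * sqrt x"
    proof -
      have s: "sqrt x * sqrt x = x" using elim by simp
      have "x * (inverse (sqrt x) / 2) = sqrt x / 2" using elim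
        by (subst s[symmetric]) (simp add: field_simps)
      then show ?thesis by (simp add: mult.commute)
    qed
    ultimately show ?case by simp
  qed
  have "((\<lambda>B. 2/3 * (D B / sqrt B)) \<longlongrightarrow> 2/3 * 1) at_top"
    by (intro tendsto_intros D_asym)
  moreover have ev: "\<forall>\<^sub>F B in at_top. 2/3 * (D B / sqrt B) = D B / (3 / 2 * sqrt B)"
    using eventually_gt_at_top[of "0::real"] by eventually_elim (simp add: field_simps)
  ultimately show "((\<lambda>B. D B / (3 / 2 * sqrt B)) \<longlongrightarrow> 2/3) at_top"
    using tendsto_cong[OF ev] by simp
qed

lemma D_lt: assumes "0 \<le> B1" "B1 < B2" shows "D B1 < D B2"
proof -
  have "0 < (B2 - B1) / (2 * exp (2 * B2)) * Cint"
    using assms Cint_pos by (intro mult_pos_pos divide_pos_pos) (auto intro: less_le_trans[of 0 "exp (-4)"])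
  then show ?thesis using D_strict[OF assms] by linarith
qed

lemma D_le: assumes "0 \<le> B1" "B1 \<le> B2" shows "D B1 \<le> D B2"
proof (cases "B1 = B2")
  case False
  then have "B1 < B2" using assms by simp
  then show ?thesis using D_lt[OF assms(1)] by (simp add: less_imp_le)
qed simp

lemma D_pos: assumes "B > 0" shows "D B > 0"
  using D_lt[of 0 B] assms D_0 by simp

lemma D_onto: assumes "y \<ge> 0" shows "\<exists>B\<ge>0. D B = y"
proof -
  have "\<forall>\<^sub>F B in at_top. y \<le> D B" using D_top by (simp add: filterlim_at_top)
  moreover have "\<forall>\<^sub>F B in at_top. (0::real) \<le> B" by (rule eventually_ge_at_top)
  ultimately have "\<forall>\<^sub>F B in at_top. y \<le> D B \<and> 0 \<le> B" by (rule eventually_conj)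
  then obtain N where N: "\<And>n. n \<ge> N \<Longrightarrow> y \<le> D n \<and> 0 \<le> n" unfolding eventually_at_top_linorder by blast
  define M where "M = max N 0"
  have M: "y \<le> D M" "0 \<le> M" using N[of M] by (auto simp: M_def)
  have "\<exists>x. 0 \<le> x \<and> x \<le> M \<and> D x = y"
    by (rule IVT'[of D 0 y M]) (use M assms D_0 D_cont in auto)
  then show ?thesis by blast
qed

definition Bq :: "real \<Rightarrow> real \<Rightarrow> real" where
  "Bq \<sigma> \<xi> = (THE B. B \<ge> 0 \<and> \<sigma> * deriv Ifun B = \<bar>\<xi>\<bar>)"

lemma deriv_Ifun: "deriv Ifun B = D B" by (rule DERIV_imp_deriv[OF Ifun_deriv])

lemma Bq_spec: assumes "\<sigma> > 0" shows "Bq \<sigma> \<xi> \<ge> 0" "\<sigma> * D (Bq \<sigma> \<xi>) = \<bar>\<xi>\<bar>"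
proof -
  have ex: "\<exists>!B. B \<ge> 0 \<and> \<sigma> * deriv Ifun B = \<bar>\<xi>\<bar>"
  proof -
    have y0: "\<bar>\<xi>\<bar> / \<sigma> \<ge> 0" using assms by simp
    obtain B where B: "B \<ge> 0" "D B = \<bar>\<xi>\<bar> / \<sigma>" using D_onto[OF y0] by blast
    show ?thesis
    proof (rule ex1I[of _ B])
      show "B \<ge> 0 \<and> \<sigma> * deriv Ifun B = \<bar>\<xi>\<bar>" using B(1) assms unfolding deriv_Ifun B(2) by simp
      fix B' assume B': "B' \<ge> 0 \<and> \<sigma> * deriv Ifun B' = \<bar>\<xi>\<bar>"
      then have "\<sigma> * D B' = \<sigma> * D B" using B assms by (simp add: deriv_Ifun)
      then have "D B' = D B" using assms by simp
      show "B' = B"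
      proof (rule ccontr)
        assume "B' \<noteq> B"
        then consider "B' < B" | "B < B'" by linarith
        then show False
        proof cases
          case 1 then have "D B' < D B" using B' by (intro D_lt) auto
          then show False using \<open>D B' = D B\<close> by simp
        next
          case 2 then have "D B < D B'" using B by (intro D_lt) auto
          then show False using \<open>D B' = D B\<close> by simp
        qed
      qed
    qed
  qed
  from theI'[OF ex] show "Bq \<sigma> \<xi> \<ge> 0" "\<sigma> * D (Bq \<sigma> \<xi>) = \<bar>\<xi>\<bar>"
    unfolding Bq_def by (simp_all add: deriv_Ifun)
qed

lemma phi_q_eq: "phi_q \<rho> \<sigma> \<xi> = \<rho> * Bq \<sigma> \<xi> * \<bar>\<xi>\<bar> - \<rho> * \<sigma> * Ifun (Bq \<sigma> \<xi>)"
  unfolding phi_q_def Bq_def Let_def ..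

lemma alg: assumes "r > 0" "d > 0" "B = r * r"
  shows "3 / (d / r)^2 - 3 * (i / (B * r)) / (d / r)^3 = 3 * (B * d - i) / (d::real)^3"
  using assms by (simp add: field_simps eval_nat_numeral)

definition R :: "real \<Rightarrow> real" where "R B = 3 * (B * D B - Ifun B) / (D B)^3"

lemma R_lim: "(R \<longlongrightarrow> 1) at_top"
proof -
  define u where "u B = D B / sqrt B" for B
  define v where "v B = Ifun B / (B * sqrt B)" for B
  have "((\<lambda>B. 3 / (u B)^2 - 3 * v B / (u B)^3) \<longlongrightarrow> 3 / 1^2 - 3 * (2/3) / 1^3) at_top"
    unfolding u_def v_def by (intro tendsto_intros D_asym I_asym) simp_all
  then have l: "((\<lambda>B. 3 / (u B)^2 - 3 * v B / (u B)^3) \<longlongrightarrow> 1) at_top" by simp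
  have ev: "\<forall>\<^sub>F B in at_top. 3 / (u B)^2 - 3 * v B / (u B)^3 = R B"
    using eventually_gt_at_top[of "0::real"]
  proof eventually_elim
    case (elim B)
    define r where "r = sqrt B"
    have r0: "r > 0" using elim by (simp add: r_def)
    have Br: "B = r * r" using elim by (simp add: r_def)
    have d0: "D B > 0" using D_pos[OF elim] .
    show ?case unfolding u_def v_def R_def r_def[symmetric] by (rule alg[OF r0 d0 Br])
  qed
  show ?thesis using tendsto_cong[OF ev] l by simp
qed

lemma Bq_top: assumes "\<sigma> > 0" shows "filterlim (Bq \<sigma>) at_top at_infinity"
  unfolding filterlim_at_top
proof
  fix Z :: real
  define M where "M = max Z 0"
  show "\<forall>\<^sub>F \<xi> in at_infinity. Z \<le> Bq \<sigma> \<xi>"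
    unfolding eventually_at_infinity
  proof (rule exI[of _ "\<sigma> * D M + 1"], intro allI impI)
    fix \<xi> :: real assume \<xi>: "\<sigma> * D M + 1 \<le> norm \<xi>"
    show "Z \<le> Bq \<sigma> \<xi>"
    proof (rule ccontr)
      assume "\<not> Z \<le> Bq \<sigma> \<xi>"
      then have "Bq \<sigma> \<xi> \<le> M" by (simp add: M_def)
      then have "D (Bq \<sigma> \<xi>) \<le> D M" using Bq_spec(1)[OF assms] by (intro D_le) auto
      then have "\<sigma> * D (Bq \<sigma> \<xi>) \<le> \<sigma> * D M" using assms by simp
      then show False using Bq_spec(2)[OF assms, of \<xi>] \<xi> by simp
    qed
  qed
qed

lemma alg2: assumes "\<rho> > 0" "\<sigma> > 0" "d > (0::real)"
  shows "3 * (B * d - I) / d^3 = (\<rho> * B * (\<sigma> * d) - \<rho> * \<sigma> * I) / (\<rho> / (3 * \<sigma>^2) * (\<sigma> * d)^3)"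
  using assms by (simp add: field_simps eval_nat_numeral)

lemma part_q:
  assumes "\<rho> > 0" "\<sigma> > 0"
  shows "((\<lambda>\<xi>. phi_q \<rho> \<sigma> \<xi> / (\<rho> / (3 * \<sigma>^2) * \<bar>\<xi>\<bar>^3)) \<longlongrightarrow> 1) at_infinity"
proof -
  have l: "((\<lambda>\<xi>. R (Bq \<sigma> \<xi>)) \<longlongrightarrow> 1) at_infinity"
    by (rule filterlim_compose[OF R_lim Bq_top[OF assms(2)]])
  have "\<forall>\<^sub>F \<xi> in at_infinity. (\<xi>::real) \<noteq> 0"
    unfolding eventually_at_infinity by (rule exI[of _ 1]) auto
  then have ev: "\<forall>\<^sub>F \<xi> in at_infinity. R (Bq \<sigma> \<xi>) = phi_q \<rho> \<sigma> \<xi> / (\<rho> / (3 * \<sigma>^2) * \<bar>\<xi>\<bar>^3)"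
  proof eventually_elim
    case (elim \<xi>)
    define B where "B = Bq \<sigma> \<xi>"
    have B0: "B \<ge> 0" and xi: "\<sigma> * D B = \<bar>\<xi>\<bar>" using Bq_spec[OF assms(2)] by (auto simp: B_def)
    have "\<sigma> * D B > 0" using xi elim by simp
    then have d0: "D B > 0" using assms(2) by (rule zero_less_mult_pos)
    have P: "phi_q \<rho> \<sigma> \<xi> = \<rho> * B * (\<sigma> * D B) - \<rho> * \<sigma> * Ifun B"
      unfolding phi_q_eq B_def[symmetric] xi ..
    show ?case unfolding B_def[symmetric] P R_def xi[symmetric] by (rule alg2[OF assms d0])
  qed
  show ?thesis using tendsto_cong[OF ev] l by simp
qed

theorem mainTheorem6:
  fixes \<rho> \<sigma> :: real
  assumes "\<rho> > 0" and "\<sigma> > 0"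
  shows "((\<lambda>\<xi>. phi_a \<rho> \<sigma> \<xi> / (\<rho> * \<bar>\<xi>\<bar>)) \<longlongrightarrow> 1) at_infinity
       \<and> ((\<lambda>\<xi>. phi_q \<rho> \<sigma> \<xi> / (\<rho> / (3 * \<sigma>^2) * \<bar>\<xi>\<bar>^3)) \<longlongrightarrow> 1) at_infinity"
  using part_a[OF assms] part_q[OF assms] by blast

end
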